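(* Let $\mu$ be a function on Borel subsets of $\mathbf{S}^n$ such that (i) $\mu$ is nonnegative and countably additive; (ii) $\mu(\mathbf{S}^n)=\sigma(\mathbf{S}^n)$; (iii) $\mu(\mathbf{S}^n\setminus\omega)>\sigma(\omega^* )$ for every spherically convex subset $\omega\subset\mathbf{S}^n$, $\omega\neq\mathbf{S}^n$. Then the pair $(\tilde h,\tilde\rho)\in\mathcal{A}$ minimizing $\mathcal{Q}$ over $\mathcal{A}$ (consisting of the support and radial functions of a closed convex hypersurface in $\mathcal{F}^n$) is unique up to rescaling: if $(h_1,\rho_1)$ and $(h_2,\rho_2)$ are two such minimizing pairs, then $(h_2,\rho_2)=(ch_1,c\rho_1)$ for some constant $c>0$.
   Context: $\mathbf{S}^n$ is the unit sphere in $\mathbb{R}^{n+1}$, $n\ge1$, centered at the origin $\mathcal{O}$; $\sigma$ is the standard Lebesgue measure on $\mathbf{S}^n$; $\omega^*=\{y\in\mathbf{S}^n:\langle x,y\rangle\le0\ \forall x\in\omega\}$. $\mathcal{F}^n$ is the set of boundaries of compact convex sets in $\mathbb{R}^{n+1}$ containing $\mathcal{O}$ in their interior; for $F\in\mathcal{F}^n$, its radial function $\rho(x)$ is the distance from $\mathcal{O}$ to the point where the ray in direction $x\in\mathbf{S}^n$ meets $F$, and its support function is $h(N)=\sup_{x}\rho(x)\langle x,N\rangle$. $\mathcal{A}=\{(h,\rho)\in C(\mathbf{S}^n)\times C(\mathbf{S}^n): h>0,\rho>0,\ \log h(N)-\log\rho(x)\ge\log\langle x,N\rangle$ whenever $\langle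 x,N\rangle>0\}$ and $\mathcal{Q}[h,\rho]=\int_{\mathbf{S}^n}\log h\,d\sigma-\int_{\mathbf{S}^n}\log\rho\,d\mu$. *)

theory Defs
  imports "HOL-Analysis.Analysis"
begin

text \<open>Ambient space R^(n+1) is a euclidean_space type 'a; S^n = sphere 0 1.\<close>

text \<open>Standard (Lebesgue) surface measure sigma on the unit sphere, defined via the cone
  construction: sigma(A) = (n+1) * vol{t x : 0 < t <= 1, x in A}, on Borel subsets of S^n.\<close>
definition sphere_measure :: "'a::euclidean_space measure" where
  "sphere_measure = measure_of (sphere 0 1) (sets (restrict_space borel (sphere (0::'a) 1)))
     (\<lambda>A. of_nat DIM('a) * emeasure lborel {t *\<^sub>R x | t x. t \<in> {0<..1} \<and> x \<in> A})"

definition polar_sph :: "'a::euclidean_space set \<Rightarrow> 'a set" where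
  "polar_sph \<omega> = {y \<in> sphere 0 1. \<forall>x\<in>\<omega>. inner x y \<le> 0}"

definition sph_convex :: "'a::euclidean_space set \<Rightarrow> bool" where
  "sph_convex \<omega> \<longleftrightarrow> \<omega> \<subseteq> sphere 0 1 \<and> convex {t *\<^sub>R x | t x. 0 \<le> t \<and> x \<in> \<omega>}"

definition hypersurfaces :: "'a::euclidean_space set set" where
  "hypersurfaces = {frontier K | K. compact K \<and> convex K \<and> 0 \<in> interior K}"

definition radial_fun :: "'a::euclidean_space set \<Rightarrow> 'a \<Rightarrow> real" where
  "radial_fun F x = (THE t. t > 0 \<and> t *\<^sub>R x \<in> F)"

definition support_fun :: "'a::euclidean_space set \<Rightarrow> 'a \<Rightarrow> real" where
  "support_fun F N = (SUP x\<in>sphere 0 1. radial_fun F x * inner x N)"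

definition admissible :: "(('a::euclidean_space \<Rightarrow> real) \<times> ('a \<Rightarrow> real)) set" where
  "admissible = {(h, \<rho>). continuous_on (sphere 0 1) h \<and> continuous_on (sphere 0 1) \<rho> \<and>
      (\<forall>x\<in>sphere 0 1. h x > 0 \<and> \<rho> x > 0) \<and>
      (\<forall>x\<in>sphere 0 1. \<forall>N\<in>sphere 0 1. inner x N > 0 \<longrightarrow>
          ln (h N) - ln (\<rho> x) \<ge> ln (inner x N))}"

definition Qfun :: "'a::euclidean_space measure \<Rightarrow> ('a \<Rightarrow> real) \<Rightarrow> ('a \<Rightarrow> real) \<Rightarrow> real" where
  "Qfun \<mu> h \<rho> = (\<integral>x. ln (h x) \<partial>sphere_measure) - (\<integral>x. ln (\<rho> x) \<partial>\<mu>)"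

definition is_Q_minimizer :: "'a::euclidean_space measure \<Rightarrow> ('a \<Rightarrow> real) \<Rightarrow> ('a \<Rightarrow> real) \<Rightarrow> bool" where
  "is_Q_minimizer \<mu> h \<rho> \<longleftrightarrow> (h, \<rho>) \<in> admissible \<and>
      (\<forall>(h', \<rho>')\<in>admissible. Qfun \<mu> h \<rho> \<le> Qfun \<mu> h' \<rho>')"

definition is_body_pair :: "('a::euclidean_space \<Rightarrow> real) \<Rightarrow> ('a \<Rightarrow> real) \<Rightarrow> bool" where
  "is_body_pair h \<rho> \<longleftrightarrow> (\<exists>F\<in>hypersurfaces. \<forall>x\<in>sphere 0 1.
      \<rho> x = radial_fun F x \<and> h x = support_fun F x)"

end

theory Submission
  imports Defs
begin
lemma ratio_step:
  fixes A B :: "'a::real_inner \<Rightarrow> real" and V :: "'a \<Rightarrow> 'a"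
  assumes al: "0 < \<alpha>" "\<alpha> \<le> A s" "\<alpha> \<le> A t"
    and Bp: "0 < B s" "0 < B t"
    and be: "B s / A s \<le> \<beta>" "B t / A t \<le> \<beta>"
    and v1: "inner (V s) t \<le> A t" "inner (V t) s \<le> A s"
    and v2: "inner (V t) s * (B t / A t) \<le> B s" "inner (V s) t * (B s / A s) \<le> B t"
    and v3: "inner (V s) s = A s" "inner (V t) t = A t"
  shows "\<bar>B t / A t - B s / A s\<bar> \<le> \<beta> / \<alpha> * inner (V t - V s) (t - s)"
proof -
  define Rs where "Rs = B s / A s"
  define Rt where "Rt = B t / A t"
  define D where "D = inner (V t - V s) (t - s)"
  have As: "A s > 0" "A t > 0" using al by auto
  have Rp: "Rs > 0" "Rt > 0" using As Bp by (auto simp: Rs_def Rt_def)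
  have Bs: "B s = Rs * A s" "B t = Rt * A t" using As by (auto simp: Rs_def Rt_def)
  have e1: "inner (V t) s \<ge> A s - D"
  proof -
    have "inner (V t) s = A t - inner (V t) (t - s)" using v3 by (simp add: inner_diff_right)
    moreover have "A t \<ge> A s + inner (V s) (t - s)" using v1 v3 by (simp add: inner_diff_right)
    ultimately show ?thesis by (simp add: D_def inner_diff_left)
  qed
  have e2: "inner (V s) t \<ge> A t - D"
  proof -
    have "inner (V s) t = A s - inner (V s) (s - t)" using v3 by (simp add: inner_diff_right)
    moreover have "A s \<ge> A t + inner (V t) (s - t)" using v1 v3 by (simp add: inner_diff_right)
    moreover have "D = inner (V s - V t) (s - t)" unfolding D_def
      by (metis inner_minus_left inner_minus_right minus_diff_eq)
    ultimately show ?thesis by (simp add: inner_diff_left)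
  qed
  have i1: "(Rt - Rs) * A s \<le> Rt * D"
  proof -
    have "Rt * (A s - D) \<le> Rt * inner (V t) s" using e1 Rp by (intro mult_left_mono) auto
    also have "\<dots> \<le> Rs * A s" using v2(1) Bs(1) by (simp add: Rt_def mult.commute)
    finally show ?thesis by (simp add: algebra_simps)
  qed
  have i2: "(Rs - Rt) * A t \<le> Rs * D"
  proof -
    have "Rs * (A t - D) \<le> Rs * inner (V s) t" using e2 Rp by (intro mult_left_mono) auto
    also have "\<dots> \<le> Rt * A t" using v2(2) Bs(2) by (simp add: Rs_def mult.commute)
    finally show ?thesis by (simp add: algebra_simps)
  qed
  have Rb: "Rs \<le> \<beta>" "Rt \<le> \<beta>" using be by (auto simp: Rs_def Rt_def)
  have "\<bar>Rt - Rs\<bar> \<le> \<beta> / \<alpha> * D"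
  proof (cases "Rt \<ge> Rs")
    case True
    have "0 \<le> Rt * D" using i1 True As by (meson diff_ge_0_iff_ge mult_nonneg_nonneg less_imp_le order_trans)
    then have "D \<ge> 0" using Rp by (simp add: zero_le_mult_iff)
    have "(Rt - Rs) * \<alpha> \<le> (Rt - Rs) * A s" using True al by (intro mult_left_mono) auto
    also have "\<dots> \<le> \<beta> * D" using i1 mult_right_mono[OF Rb(2) \<open>D \<ge> 0\<close>] by linarith
    finally have "(Rt - Rs) \<le> \<beta> * D / \<alpha>" using al by (simp add: field_simps)
    then show ?thesis using True by simp
  next
    case False
    have "0 \<le> Rs * D" using i2 False As by (meson diff_ge_0_iff_ge mult_nonneg_nonneg less_imp_le order_trans linorder_not_le)
    then have "D \<ge> 0" using Rp by (simp add: zero_le_mult_iff)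
    have "(Rs - Rt) * \<alpha> \<le> (Rs - Rt) * A t" using False al by (intro mult_left_mono) auto
    also have "\<dots> \<le> \<beta> * D" using i2 mult_right_mono[OF Rb(1) \<open>D \<ge> 0\<close>] by linarith
    finally have "(Rs - Rt) \<le> \<beta> * D / \<alpha>" using al by (simp add: field_simps)
    then show ?thesis using False by simp
  qed
  then show ?thesis by (simp add: Rs_def Rt_def D_def)
qed

lemma ratio_const:
  fixes A B :: "'a::real_inner \<Rightarrow> real" and V :: "'a \<Rightarrow> 'a"
  assumes al: "0 < \<alpha>"
    and bnd: "\<And>w. w \<in> closed_segment y z \<Longrightarrow> \<alpha> \<le> A w \<and> 0 < B w \<and> B w / A w \<le> \<beta>"
    and sub: "\<And>w u. w \<in> closed_segment y z \<Longrightarrow> u \<in> closed_segment y z \<Longrightarrow>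
              inner (V w) u \<le> A u \<and> inner (V w) u * (B w / A w) \<le> B u"
    and tch: "\<And>w. w \<in> closed_segment y z \<Longrightarrow> inner (V w) w = A w"
  shows "B z / A z = B y / A y"
proof -
  define R where "R w = B w / A w" for w
  define C where "C = \<beta> / \<alpha>"
  define p where "p N k = y + (real k / real N) *\<^sub>R (z - y)" for N k :: nat
  have pin: "p N k \<in> closed_segment y z" if "k \<le> N" "0 < N" for N k
  proof -
    have "p N k = (1 - real k / real N) *\<^sub>R y + (real k / real N) *\<^sub>R z"
      by (simp add: p_def algebra_simps)
    moreover have "0 \<le> real k / real N" "real k / real N \<le> 1" using that by auto
    ultimately show ?thesis unfolding closed_segment_def by blast
  qed
  have step: "\<bar>R u - R w\<bar> \<le> C * inner (V u - V w) (u - w)"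
    if "w \<in> closed_segment y z" "u \<in> closed_segment y z" for u w
    unfolding R_def C_def
    by (rule ratio_step[OF al]) (use bnd[OF that(1)] bnd[OF that(2)] sub[OF that(1) that(2)]
        sub[OF that(2) that(1)] sub[OF that(1) that(1)] tch[OF that(1)] tch[OF that(2)] in auto)
  have main: "\<bar>R (p N k) - R y\<bar> \<le> C * inner (V (p N k) - V y) (z - y) / real N"
    if "0 < N" "k \<le> N" for N k
    using that
  proof (induction k)
    case 0
    then show ?case by (simp add: p_def)
  next
    case (Suc k)
    have d: "p N (Suc k) - p N k = (1 / real N) *\<^sub>R (z - y)"
      by (simp add: p_def algebra_simps add_divide_distrib)
    have "\<bar>R (p N (Suc k)) - R y\<bar> \<le> \<bar>R (p N (Suc k)) - R (p N k)\<bar> + \<bar>R (p N k) - R y\<bar>"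
      by linarith
    also have "\<dots> \<le> C * inner (V (p N (Suc k)) - V (p N k)) (p N (Suc k) - p N k)
                   + C * inner (V (p N k) - V y) (z - y) / real N"
      using step[OF pin pin, of k N "Suc k" N] Suc by auto
    also have "\<dots> = C * inner (V (p N (Suc k)) - V y) (z - y) / real N"
      unfolding d by (simp add: inner_diff_left inner_diff_right diff_divide_distrib add_divide_distrib algebra_simps)
    finally show ?case .
  qed
  have py: "p N 0 = y" for N by (simp add: p_def)
  have pz: "p N N = z" if "0 < N" for N using that by (simp add: p_def)
  define K where "K = C * inner (V z - V y) (z - y)"
  have bound: "\<bar>R z - R y\<bar> \<le> K / real N" if "0 < N" for N
    using main[OF that order.refl] pz[OF that] by (simp add: K_def)
  show ?thesis
  proof (rule ccontr)
    assume ne: "B z / A z \<noteq> B y / A y"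
    then have pos: "\<bar>R z - R y\<bar> > 0" by (simp add: R_def)
    obtain N :: nat where N: "K / \<bar>R z - R y\<bar> < real N" using reals_Archimedean2 by blast
    have "0 < N"
    proof (rule ccontr)
      assume "\<not> 0 < N"
      then have "K / \<bar>R z - R y\<bar> < 0" using N by simp
      then have "K < 0" using pos by (simp add: divide_less_0_iff)
      then show False using bound[of 1] pos by simp
    qed
    have "K < real N * \<bar>R z - R y\<bar>" using N pos by (simp add: divide_less_eq)
    moreover have "\<bar>R z - R y\<bar> * real N \<le> K" using bound[OF \<open>0 < N\<close>] \<open>0 < N\<close>
      by (simp add: le_divide_eq)
    ultimately show False by (simp add: mult.commute)
  qed
qed

definition Hs :: "('a::euclidean_space \<Rightarrow> real) \<Rightarrow> 'a \<Rightarrow> real" where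
  "Hs f w = (SUP x\<in>sphere 0 1. f x * inner x w)"

lemma sphere_ne: "sphere (0::'a::euclidean_space) 1 \<noteq> {}"
  by simp

lemma Hs_cont_term: "continuous_on (sphere 0 1) f \<Longrightarrow> continuous_on (sphere 0 1) (\<lambda>x. f x * inner x w)"
  by (intro continuous_intros) auto

lemma Hs_bdd:
  assumes "continuous_on (sphere 0 1) f"
  shows "bdd_above ((\<lambda>x. f x * inner x w) ` sphere (0::'a::euclidean_space) 1)"
  by (intro bounded_imp_bdd_above compact_imp_bounded compact_continuous_image Hs_cont_term assms)
    simp

lemma Hs_upper:
  assumes "continuous_on (sphere 0 1) f" "x \<in> sphere (0::'a::euclidean_space) 1"
  shows "f x * inner x w \<le> Hs f w"
  unfolding Hs_def using Hs_bdd[OF assms(1)] assms(2) by (rule cSUP_upper2) auto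

lemma Hs_least:
  assumes "\<And>x. x \<in> sphere (0::'a::euclidean_space) 1 \<Longrightarrow> f x * inner x w \<le> c"
  shows "Hs f w \<le> c"
  unfolding Hs_def using assms by (intro cSUP_least) auto

lemma Hs_attained:
  assumes "continuous_on (sphere 0 1) f"
  obtains x where "x \<in> sphere (0::'a::euclidean_space) 1" "Hs f w = f x * inner x w"
proof -
  obtain x where x: "x \<in> sphere (0::'a) 1" "\<And>y. y \<in> sphere 0 1 \<Longrightarrow> f y * inner y w \<le> f x * inner x w"
    using continuous_attains_sup[OF compact_sphere sphere_ne Hs_cont_term[OF assms]] by blast
  have "Hs f w = f x * inner x w"
    using Hs_upper[OF assms x(1)] Hs_least[of f w "f x * inner x w"] x(2) by (auto intro: antisym)
  then show ?thesis using that x(1) by blast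
qed

lemma Hs_scale:
  assumes "continuous_on (sphere 0 1) f" "0 < r"
  shows "Hs f (r *\<^sub>R w) = r * Hs f (w::'a::euclidean_space)"
proof (rule antisym)
  obtain x where x: "x \<in> sphere (0::'a) 1" "Hs f (r *\<^sub>R w) = f x * inner x (r *\<^sub>R w)"
    using Hs_attained[OF assms(1)] by blast
  have "f x * inner x w \<le> Hs f w" using Hs_upper[OF assms(1) x(1)] .
  then show "Hs f (r *\<^sub>R w) \<le> r * Hs f w" using x(2) assms(2)
    by (simp add: algebra_simps)
next
  obtain x where x: "x \<in> sphere (0::'a) 1" "Hs f w = f x * inner x w"
    using Hs_attained[OF assms(1)] by blast
  have "f x * inner x (r *\<^sub>R w) \<le> Hs f (r *\<^sub>R w)" using Hs_upper[OF assms(1) x(1)] .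
  then show "r * Hs f w \<le> Hs f (r *\<^sub>R w)" using x(2) assms(2)
    by (simp add: algebra_simps)
qed

lemma Hs_lower:
  assumes "continuous_on (sphere 0 1) f" "\<And>x. x \<in> sphere 0 1 \<Longrightarrow> m \<le> f x" "w \<noteq> 0"
  shows "m * norm w \<le> Hs f (w::'a::euclidean_space)"
proof -
  have s: "w /\<^sub>R norm w \<in> sphere 0 1" using assms(3) by simp
  have "f (w /\<^sub>R norm w) * inner (w /\<^sub>R norm w) w = f (w /\<^sub>R norm w) * norm w"
    using assms(3) by (simp add: inner_commute power2_norm_eq_inner[symmetric] power2_eq_square)
  moreover have "m * norm w \<le> f (w /\<^sub>R norm w) * norm w"
    using assms(2)[OF s] by (simp add: mult_right_mono)
  ultimately show ?thesis using Hs_upper[OF assms(1) s, of w] by linarith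
qed

lemma Hs_upper_norm:
  assumes "\<And>x. x \<in> sphere 0 1 \<Longrightarrow> 0 \<le> f x \<and> f x \<le> M"
  shows "Hs f (w::'a::euclidean_space) \<le> M * norm w"
proof (rule Hs_least)
  fix x :: 'a assume x: "x \<in> sphere 0 1"
  have "inner x w \<le> norm w" using norm_cauchy_schwarz[of x w] x by simp
  moreover have "0 \<le> norm w" by simp
  ultimately have "f x * inner x w \<le> f x * norm w" using assms[OF x] by (simp add: mult_left_mono)
  also have "\<dots> \<le> M * norm w" using assms[OF x] by (simp add: mult_right_mono)
  finally show "f x * inner x w \<le> M * norm w" .
qed

lemma Hs_lipschitz:
  assumes "continuous_on (sphere 0 1) f" "\<And>x. x \<in> sphere 0 1 \<Longrightarrow> 0 \<le> f x \<and> f x \<le> M"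
  shows "Hs f w \<le> Hs f v + M * norm (w - (v::'a::euclidean_space))"
proof (rule Hs_least)
  fix x :: 'a assume x: "x \<in> sphere 0 1"
  have "f x * inner x w = f x * inner x v + f x * inner x (w - v)" by (simp add: algebra_simps inner_diff_right)
  also have "f x * inner x (w - v) \<le> M * norm (w - v)"
  proof -
    have "inner x (w - v) \<le> norm (w - v)" using norm_cauchy_schwarz[of x "w - v"] x by simp
    then have "f x * inner x (w - v) \<le> f x * norm (w - v)" using assms(2)[OF x] by (simp add: mult_left_mono)
    also have "\<dots> \<le> M * norm (w - v)" using assms(2)[OF x] by (simp add: mult_right_mono)
    finally show ?thesis .
  qed
  then have "f x * inner x v + f x * inner x (w - v) \<le> Hs f v + M * norm (w - v)"
    using Hs_upper[OF assms(1) x, of v] by linarith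
  finally show "f x * inner x w \<le> Hs f v + M * norm (w - v)" .
qed

lemma Hs_continuous:
  assumes "continuous_on (sphere 0 1) f" "\<And>x. x \<in> sphere 0 1 \<Longrightarrow> 0 \<le> f x \<and> f x \<le> M"
  shows "continuous_on (A::'a::euclidean_space set) (Hs f)"
proof -
  have M: "0 \<le> M" using assms(2)[of "SOME x::'a. x \<in> sphere 0 1"] sphere_ne
    by (metis all_not_in_conv order_trans someI_ex)
  have "M-lipschitz_on A (Hs f)"
  proof (rule lipschitz_onI)
    fix w v assume "w \<in> A" "v \<in> A"
    have "Hs f w - Hs f v \<le> M * norm (w - v)" using Hs_lipschitz[OF assms, of w v] by linarith
    moreover have "Hs f v - Hs f w \<le> M * norm (v - w)" using Hs_lipschitz[OF assms, of v w] by linarith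
    ultimately show "dist (Hs f w) (Hs f v) \<le> M * dist w v"
      by (simp add: dist_real_def dist_norm norm_minus_commute abs_le_iff)
  qed (use M in auto)
  then show ?thesis by (rule lipschitz_on_continuous_on)
qed

abbreviation "SA \<equiv> sets (restrict_space borel (sphere (0::'a::euclidean_space) 1))"

definition sm_fun :: "'a::euclidean_space set \<Rightarrow> ennreal" where
  "sm_fun A = of_nat DIM('a) * emeasure lborel {t *\<^sub>R x | t x. t \<in> {0<..1} \<and> x \<in> A}"

lemma SA_sub: "SA \<subseteq> Pow (sphere (0::'a::euclidean_space) 1)"
  using sets.sets_into_space[of _ "restrict_space borel (sphere (0::'a) 1)"]
  by (auto simp: space_restrict_space)

lemma sigma_SA: "sigma_sets (sphere (0::'a::euclidean_space) 1) SA = SA"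
  using sets.sigma_sets_eq[of "restrict_space borel (sphere (0::'a) 1)"]
  by (simp add: space_restrict_space)

lemma sm_space: "space (sphere_measure :: 'a::euclidean_space measure) = sphere 0 1"
  unfolding sphere_measure_def using SA_sub by (simp add: space_measure_of_conv)

lemma sm_sets: "sets (sphere_measure :: 'a::euclidean_space measure) = SA"
  unfolding sphere_measure_def by (simp add: sets_measure_of_conv SA_sub sigma_SA)

lemma sm_emeasure: "emeasure (sphere_measure :: 'a::euclidean_space measure) B =
   (if B \<in> SA \<and> measure_space (sphere 0 1) SA (sm_fun :: 'a set \<Rightarrow> ennreal) then sm_fun B else 0)"
  unfolding sphere_measure_def sm_fun_def emeasure_measure_of_conv sigma_SA by simp

lemma cone_sub_cball: "{t *\<^sub>R x | t x. t \<in> {0<..1} \<and> x \<in> A} \<subseteq> cball 0 1"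
  if "A \<subseteq> sphere (0::'a::euclidean_space) 1" for A
  using that by auto

lemma lborel_fin: "emeasure lborel (X :: 'a::euclidean_space set) < \<infinity>" if "X \<subseteq> cball 0 1"
proof (cases "X \<in> sets lborel")
  case True
  have "emeasure lborel X \<le> emeasure lborel (cball (0::'a) 1)"
    using that by (intro emeasure_mono) auto
  also have "\<dots> < \<infinity>" by (rule emeasure_lborel_cball_finite)
  finally show ?thesis .
next
  case False
  then show ?thesis by (simp add: emeasure_notin_sets)
qed

lemma sm_finite: "emeasure (sphere_measure :: 'a::euclidean_space measure) B < \<infinity>"
proof -
  have "sm_fun B < \<infinity>" if "B \<in> SA" for B :: "'a set"
  proof -
    have "B \<subseteq> sphere 0 1" using that SA_sub by blast
    then have "emeasure lborel {t *\<^sub>R x | t x. t \<in> {0<..1} \<and> x \<in> B} < \<infinity>"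
      by (intro lborel_fin cone_sub_cball)
    then show ?thesis unfolding sm_fun_def
      by (simp add: ennreal_mult_less_top of_nat_less_top)
  qed
  then show ?thesis by (simp add: sm_emeasure)
qed

lemma sm_zero_if_not_ms:
  assumes "\<not> measure_space (sphere 0 1) SA (sm_fun :: 'a::euclidean_space set \<Rightarrow> ennreal)"
  shows "emeasure (sphere_measure :: 'a measure) B = 0"
  using assms by (simp add: sm_emeasure)

lemma cone_ball_eq:
  fixes N0 :: "'a::euclidean_space"
  shows "{t *\<^sub>R x | t x. t \<in> {0<..1} \<and> x \<in> sphere 0 1 \<inter> ball N0 e} =
         (sgn -` ball N0 e) \<inter> (cball 0 1 - {0})"
proof (intro equalityI subsetI)
  fix y assume "y \<in> {t *\<^sub>R x | t x. t \<in> {0<..1} \<and> x \<in> sphere (0::'a) 1 \<inter> ball N0 e}"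
  then obtain t x where y: "y = t *\<^sub>R x" "0 < t" "t \<le> 1" "norm x = 1" "x \<in> ball N0 e" by auto
  have "sgn y = x" using y by (simp add: sgn_scaleR sgn_div_norm)
  then show "y \<in> (sgn -` ball N0 e) \<inter> (cball 0 1 - {0})" using y by auto
next
  fix y :: 'a assume y: "y \<in> (sgn -` ball N0 e) \<inter> (cball 0 1 - {0})"
  then have "y = norm y *\<^sub>R sgn y" "0 < norm y" "norm y \<le> 1" "norm (sgn y) = 1" "sgn y \<in> ball N0 e"
    by (auto simp: sgn_div_norm norm_sgn)
  then show "y \<in> {t *\<^sub>R x | t x. t \<in> {0<..1} \<and> x \<in> sphere 0 1 \<inter> ball N0 e}"
    by (intro CollectI exI[of _ "norm y"] exI[of _ "sgn y"]) auto
qed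

lemma ball_in_cone:
  fixes N0 :: "'a::euclidean_space"
  assumes N0: "norm N0 = 1" and e: "0 < e"
  shows "ball ((1/2) *\<^sub>R N0) (min (1/4) (e/8)) \<subseteq> (sgn -` ball N0 e) \<inter> (cball 0 1 - {0})"
proof
  fix y assume "y \<in> ball ((1/2) *\<^sub>R N0) (min (1/4) (e/8))"
  then have d: "norm (y - (1/2) *\<^sub>R N0) < min (1/4) (e/8)" by (simp add: dist_norm norm_minus_commute)
  define n where "n = norm y"
  have c: "norm ((1/2) *\<^sub>R N0) = 1/2" using N0 by simp
  have "\<bar>n - 1/2\<bar> \<le> norm (y - (1/2) *\<^sub>R N0)"
    unfolding n_def using norm_triangle_ineq3[of y "(1/2) *\<^sub>R N0"] c by simp
  then have n: "1/4 < n" "n \<le> 1" using d by auto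
  have "norm (y - n *\<^sub>R N0) \<le> norm (y - (1/2) *\<^sub>R N0) + norm ((1/2) *\<^sub>R N0 - n *\<^sub>R N0)"
    by (rule order_trans[OF _ norm_triangle_ineq]) simp
  also have "norm ((1/2) *\<^sub>R N0 - n *\<^sub>R N0) = \<bar>1/2 - n\<bar>"
    using N0 by (simp add: scaleR_diff_left[symmetric])
  finally have "norm (y - n *\<^sub>R N0) \<le> 2 * norm (y - (1/2) *\<^sub>R N0)"
    using \<open>\<bar>n - 1/2\<bar> \<le> _\<close> by linarith
  then have t: "norm (y - n *\<^sub>R N0) < e/4" using d by linarith
  have y0: "y \<noteq> 0" using n by (auto simp: n_def)
  have "sgn y = (1/n) *\<^sub>R y" by (simp add: sgn_div_norm n_def divide_inverse_commute)
  moreover have "(1/n) *\<^sub>R (y - n *\<^sub>R N0) = (1/n) *\<^sub>R y - N0" using n by (simp add: scaleR_diff_right)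
  ultimately have "sgn y - N0 = (1/n) *\<^sub>R (y - n *\<^sub>R N0)" by simp
  then have "norm (sgn y - N0) = norm (y - n *\<^sub>R N0) / n" using n by simp
  also have "\<dots> < (e/4) / (1/4)"
    using t n by (intro frac_less) auto
  finally have "dist N0 (sgn y) < e" by (simp add: dist_norm norm_minus_commute)
  moreover have "y \<noteq> 0" using n by (auto simp: n_def)
  ultimately show "y \<in> (sgn -` ball N0 e) \<inter> (cball 0 1 - {0})" using n by (simp add: n_def)
qed

lemma sm_pos:
  fixes N0 :: "'a::euclidean_space"
  assumes ms: "measure_space (sphere 0 1) SA (sm_fun :: 'a set \<Rightarrow> ennreal)"
    and N0: "N0 \<in> sphere 0 1" and e: "0 < e"
  shows "0 < emeasure (sphere_measure :: 'a measure) (sphere 0 1 \<inter> ball N0 e)"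
proof -
  have inSA: "sphere 0 1 \<inter> ball N0 e \<in> SA"
    unfolding sets_restrict_space by (intro imageI) auto
  have C: "(sgn -` ball N0 e) \<inter> (cball 0 1 - {0}) \<in> sets lborel"
  proof -
    have "sgn -` ball N0 e \<inter> space borel \<in> sets borel"
      by (rule measurable_sets[OF borel_measurable_sgn]) auto
    then show ?thesis by auto
  qed
  have "0 < emeasure lborel (ball ((1/2) *\<^sub>R N0) (min (1/4) (e/8)))"
  proof -
    have m: "0 < measure lborel (ball ((1/2) *\<^sub>R N0) (min (1/4) (e/8)))"
      using content_ball_pos[of "min (1/4) (e/8)" "(1/2) *\<^sub>R N0"] e by simp
    have "emeasure lborel (ball ((1/2) *\<^sub>R N0) (min (1/4) (e/8))) =
          ennreal (measure lborel (ball ((1/2) *\<^sub>R N0) (min (1/4) (e/8))))"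
      by (rule emeasure_eq_ennreal_measure) (use emeasure_lborel_ball_finite[of "(1/2) *\<^sub>R N0" "min (1/4) (e/8)"] in simp)
    then show ?thesis using m by simp
  qed
  also have "\<dots> \<le> emeasure lborel ((sgn -` ball N0 e) \<inter> (cball 0 1 - {0}))"
    using ball_in_cone[of N0 e] N0 e C by (intro emeasure_mono) auto
  finally have p: "0 < emeasure lborel {t *\<^sub>R x | t x. t \<in> {0<..1} \<and> x \<in> sphere 0 1 \<inter> ball N0 e}"
    unfolding cone_ball_eq .
  have "DIM('a) > 0" by simp
  then have "emeasure (sphere_measure :: 'a measure) (sphere 0 1 \<inter> ball N0 e) = sm_fun (sphere 0 1 \<inter> ball N0 e)"
    using ms inSA by (simp add: sm_emeasure)
  then show ?thesis using p \<open>DIM('a) > 0\<close> unfolding sm_fun_def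
    by (simp add: ennreal_zero_less_mult_iff)
qed

lemma zero_not_in_segment:
  fixes y z :: "'a::euclidean_space"
  assumes "norm y = 1" "norm z = 1" "z \<noteq> - y"
  shows "0 \<notin> closed_segment y z"
proof
  assume "0 \<in> closed_segment y z"
  then obtain u where u: "0 \<le> u" "u \<le> 1" "(1 - u) *\<^sub>R y + u *\<^sub>R z = 0"
    unfolding closed_segment_def by auto
  then have e: "(1 - u) *\<^sub>R y = - (u *\<^sub>R z)" by (simp add: eq_neg_iff_add_eq_0)
  then have "norm ((1 - u) *\<^sub>R y) = norm (u *\<^sub>R z)" by simp
  then have "1 - u = u" using u assms by simp
  then have uh: "u = 1/2" by simp
  have "(1/2) *\<^sub>R y = (1/2) *\<^sub>R (- z)" using e unfolding uh by simp
  then have "y = - z" by (metis scaleR_minus_right scaleR_cancel_left zero_neq_numeral divide_eq_0_iff one_neq_zero)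
  then show False using assms(3) by simp
qed

lemma exists_third:
  fixes y :: "'a::euclidean_space"
  assumes "DIM('a) \<ge> 2" "norm y = 1"
  obtains u :: 'a where "norm u = 1" "u \<noteq> y" "u \<noteq> - y"
proof -
  obtain b1 b2 :: 'a where b: "b1 \<in> Basis" "b2 \<in> Basis" "b1 \<noteq> b2"
  proof -
    have "card (Basis :: 'a set) \<ge> 2" using assms(1) by simp
    then obtain B where "B \<subseteq> (Basis :: 'a set)" "card B = 2"
      by (meson obtain_subset_with_card_n)
    then obtain b1 b2 where "B = {b1, b2}" "b1 \<noteq> b2" by (meson card_2_iff)
    then show ?thesis using that \<open>B \<subseteq> Basis\<close> by auto
  qed
  have i: "inner b1 b2 = 0" using b by (simp add: inner_not_same_Basis)
  have n: "norm b1 = 1" "norm b2 = 1" using b by auto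
  show ?thesis
  proof (cases "y = b1 \<or> y = - b1")
    case True
    have "b2 \<noteq> b1" "b2 \<noteq> - b1" using i n b(3) by (auto simp: inner_minus_right)
    moreover have "b2 \<noteq> - b1 \<and> - b2 \<noteq> b1" using \<open>b2 \<noteq> - b1\<close> by auto
    ultimately show ?thesis using True that[of b2] n by auto
  next
    case False
    then have "b1 \<noteq> - y" by auto
    then show ?thesis using False that[of b1] n by auto
  qed
qed

lemma pos_min_on_sphere:
  fixes f :: "'a::euclidean_space \<Rightarrow> real"
  assumes "continuous_on (sphere 0 1) f" "\<And>x. x \<in> sphere (0::'a::euclidean_space) 1 \<Longrightarrow> 0 < f x"
  obtains m where "0 < m" "\<And>x. x \<in> sphere (0::'a) 1 \<Longrightarrow> m \<le> f x"
proof -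
  obtain x0 where "x0 \<in> sphere (0::'a) 1" "\<And>y. y \<in> sphere 0 1 \<Longrightarrow> f x0 \<le> f y"
    using continuous_attains_inf[OF compact_sphere sphere_ne assms(1)] by blast
  then show ?thesis using that[of "f x0"] assms(2) by blast
qed

lemma max_on_sphere:
  fixes f :: "'a::euclidean_space \<Rightarrow> real"
  assumes "continuous_on (sphere 0 1) f"
  obtains M where "\<And>x. x \<in> sphere (0::'a::euclidean_space) 1 \<Longrightarrow> f x \<le> M"
proof -
  obtain x0 where "x0 \<in> sphere (0::'a) 1" "\<And>y. y \<in> sphere 0 1 \<Longrightarrow> f y \<le> f x0"
    using continuous_attains_sup[OF compact_sphere sphere_ne assms(1)] by blast
  then show ?thesis using that[of "f x0"] by blast
qed

lemma H_ratio_seg: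
  fixes \<rho>1 \<rho>2 :: "'a::euclidean_space \<Rightarrow> real"
  assumes c1: "continuous_on (sphere 0 1) \<rho>1" and c2: "continuous_on (sphere 0 1) \<rho>2"
    and p1: "\<And>x. x \<in> sphere 0 1 \<Longrightarrow> 0 < \<rho>1 x" and p2: "\<And>x. x \<in> sphere 0 1 \<Longrightarrow> 0 < \<rho>2 x"
    and lat: "\<And>c N. 0 < c \<Longrightarrow> N \<in> sphere 0 1 \<Longrightarrow>
       Hs (\<lambda>x. min (\<rho>1 x) (c * \<rho>2 x)) N = min (Hs \<rho>1 N) (c * Hs \<rho>2 N)"
    and y: "y \<in> sphere 0 1" and z: "z \<in> sphere 0 1" and yz: "z \<noteq> - y"
  shows "Hs \<rho>2 z / Hs \<rho>1 z = Hs \<rho>2 y / Hs \<rho>1 y"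
proof -
  obtain m1 where m1: "0 < m1" "\<And>x. x \<in> sphere (0::'a) 1 \<Longrightarrow> m1 \<le> \<rho>1 x"
    using pos_min_on_sphere[OF c1 p1] by blast
  obtain m2 where m2: "0 < m2" "\<And>x. x \<in> sphere (0::'a) 1 \<Longrightarrow> m2 \<le> \<rho>2 x"
    using pos_min_on_sphere[OF c2 p2] by blast
  obtain M2 where M2: "\<And>x. x \<in> sphere (0::'a) 1 \<Longrightarrow> \<rho>2 x \<le> M2"
    using max_on_sphere[OF c2] by blast
  define m where "m c x = min (\<rho>1 x) (c * \<rho>2 x)" for c x
  have mc: "continuous_on (sphere 0 1) (m c)" for c
    unfolding m_def by (intro continuous_intros c1 c2)
  have latw: "Hs (m c) w = min (Hs \<rho>1 w) (c * Hs \<rho>2 w)" if "0 < c" "w \<noteq> 0" for c w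
  proof -
    have N: "w /\<^sub>R norm w \<in> sphere 0 1" using that by simp
    have w: "w = norm w *\<^sub>R (w /\<^sub>R norm w)" using that by simp
    have np: "0 < norm w" using that by simp
    have s: "Hs f w = norm w * Hs f (w /\<^sub>R norm w)" if "continuous_on (sphere 0 1) f" for f
      using Hs_scale[OF that np, of "w /\<^sub>R norm w"] np by simp
    have "Hs (m c) w = norm w * Hs (m c) (w /\<^sub>R norm w)"
      by (rule s[OF mc])
    also have "\<dots> = norm w * min (Hs \<rho>1 (w /\<^sub>R norm w)) (c * Hs \<rho>2 (w /\<^sub>R norm w))"
      using lat[OF that(1) N] by (simp add: m_def[abs_def])
    also have "\<dots> = min (norm w * Hs \<rho>1 (w /\<^sub>R norm w)) (c * (norm w * Hs \<rho>2 (w /\<^sub>R norm w)))"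
      using np by (simp add: min_mult_distrib_left mult.left_commute)
    also have "\<dots> = min (Hs \<rho>1 w) (c * Hs \<rho>2 w)"
      by (simp only: s[OF c1] s[OF c2])
    finally show ?thesis .
  qed
  have Apos: "m1 * norm w \<le> Hs \<rho>1 w" if "w \<noteq> 0" for w
    using Hs_lower[OF c1 m1(2) that] .
  have Bpos: "m2 * norm w \<le> Hs \<rho>2 w" if "w \<noteq> 0" for w
    using Hs_lower[OF c2 m2(2) that] .
  have Bup: "Hs \<rho>2 w \<le> M2 * norm w" for w
    using Hs_upper_norm[of \<rho>2 M2 w] M2 p2 by (simp add: less_imp_le)
  have n0: "0 \<notin> closed_segment y z" using zero_not_in_segment[of y z] y z yz by simp
  obtain w0 where w0: "w0 \<in> closed_segment y z" "\<And>w. w \<in> closed_segment y z \<Longrightarrow> norm w0 \<le> norm w"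
    using continuous_attains_inf[OF compact_segment _ continuous_on_norm_id, of y z] by auto
  define \<delta> where "\<delta> = norm w0"
  have "w0 \<noteq> 0" using w0(1) n0 by blast
  then have \<delta>: "0 < \<delta>" unfolding \<delta>_def by simp
  define X where "X w = (SOME x. x \<in> sphere 0 1 \<and> Hs (m (Hs \<rho>1 w / Hs \<rho>2 w)) w
                       = m (Hs \<rho>1 w / Hs \<rho>2 w) x * inner x w)" for w
  have X: "X w \<in> sphere 0 1 \<and> Hs (m (Hs \<rho>1 w / Hs \<rho>2 w)) w
                       = m (Hs \<rho>1 w / Hs \<rho>2 w) (X w) * inner (X w) w" for w
  proof -
    obtain x where "x \<in> sphere (0::'a) 1" "Hs (m (Hs \<rho>1 w / Hs \<rho>2 w)) w
                       = m (Hs \<rho>1 w / Hs \<rho>2 w) x * inner x w"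
      by (rule Hs_attained[OF mc])
    then have "\<exists>x. x \<in> sphere (0::'a) 1 \<and> Hs (m (Hs \<rho>1 w / Hs \<rho>2 w)) w
                       = m (Hs \<rho>1 w / Hs \<rho>2 w) x * inner x w" by blast
    then show ?thesis unfolding X_def by (rule someI_ex)
  qed
  define V where "V w = m (Hs \<rho>1 w / Hs \<rho>2 w) (X w) *\<^sub>R X w" for w
  show ?thesis
  proof (rule ratio_const[where \<alpha> = "m1 * \<delta>" and \<beta> = "M2 / m1" and V = V])
    show "0 < m1 * \<delta>" using m1 \<delta> by simp
  next
    fix w assume w: "w \<in> closed_segment y z"
    have wn: "w \<noteq> 0" using w n0 by auto
    have "m1 * \<delta> \<le> m1 * norm w" using w0(2)[OF w] m1 by (simp add: \<delta>_def)
    then have A: "m1 * \<delta> \<le> Hs \<rho>1 w" using Apos[OF wn] by linarith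
    have B: "0 < Hs \<rho>2 w" using Bpos[OF wn] mult_pos_pos[OF m2(1), of "norm w"] wn by simp
    have Ap: "0 < Hs \<rho>1 w" using Apos[OF wn] mult_pos_pos[OF m1(1), of "norm w"] wn by simp
    have "Hs \<rho>2 w / Hs \<rho>1 w \<le> (M2 * norm w) / (m1 * norm w)"
      using Bup[of w] Apos[OF wn] B Ap m1 wn by (intro frac_le) auto
    also have "\<dots> = M2 / m1" using wn by simp
    finally show "m1 * \<delta> \<le> Hs \<rho>1 w \<and> 0 < Hs \<rho>2 w \<and> Hs \<rho>2 w / Hs \<rho>1 w \<le> M2 / m1"
      using A B by simp
  next
    fix w u assume w: "w \<in> closed_segment y z" and u: "u \<in> closed_segment y z"
    have wn: "w \<noteq> 0" and un: "u \<noteq> 0" using w u n0 by auto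
    have B: "0 < Hs \<rho>2 w" using Bpos[OF wn] mult_pos_pos[OF m2(1), of "norm w"] wn by simp
    have Ap: "0 < Hs \<rho>1 w" using Apos[OF wn] mult_pos_pos[OF m1(1), of "norm w"] wn by simp
    define c where "c = Hs \<rho>1 w / Hs \<rho>2 w"
    have c: "0 < c" using B Ap by (simp add: c_def)
    have "inner (V w) u = m c (X w) * inner (X w) u" by (simp add: V_def c_def)
    also have "\<dots> \<le> Hs (m c) u" using Hs_upper[OF mc] X[of w] by (simp add: c_def)
    also have "\<dots> = min (Hs \<rho>1 u) (c * Hs \<rho>2 u)" using latw[OF c un] .
    finally have i: "inner (V w) u \<le> Hs \<rho>1 u" "inner (V w) u \<le> c * Hs \<rho>2 u" by auto
    have "inner (V w) u * (Hs \<rho>2 w / Hs \<rho>1 w) \<le> c * Hs \<rho>2 u * (Hs \<rho>2 w / Hs \<rho>1 w)"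
      using i(2) B Ap by (intro mult_right_mono) auto
    also have "\<dots> = Hs \<rho>2 u" using B Ap by (simp add: c_def)
    finally show "inner (V w) u \<le> Hs \<rho>1 u \<and> inner (V w) u * (Hs \<rho>2 w / Hs \<rho>1 w) \<le> Hs \<rho>2 u"
      using i(1) by simp
  next
    fix w assume w: "w \<in> closed_segment y z"
    have wn: "w \<noteq> 0" using w n0 by auto
    have B: "0 < Hs \<rho>2 w" using Bpos[OF wn] mult_pos_pos[OF m2(1), of "norm w"] wn by simp
    have Ap: "0 < Hs \<rho>1 w" using Apos[OF wn] mult_pos_pos[OF m1(1), of "norm w"] wn by simp
    define c where "c = Hs \<rho>1 w / Hs \<rho>2 w"
    have c: "0 < c" using B Ap by (simp add: c_def)
    have "inner (V w) w = Hs (m c) w" using X[of w] by (simp add: V_def c_def)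
    also have "\<dots> = min (Hs \<rho>1 w) (c * Hs \<rho>2 w)" using latw[OF c wn] .
    also have "\<dots> = Hs \<rho>1 w" using B by (simp add: c_def)
    finally show "inner (V w) w = Hs \<rho>1 w" .
  qed
qed

lemma H_ratio:
  fixes \<rho>1 \<rho>2 :: "'a::euclidean_space \<Rightarrow> real"
  assumes dim: "DIM('a) \<ge> 2"
    and c1: "continuous_on (sphere 0 1) \<rho>1" and c2: "continuous_on (sphere 0 1) \<rho>2"
    and p1: "\<And>x. x \<in> sphere 0 1 \<Longrightarrow> 0 < \<rho>1 x" and p2: "\<And>x. x \<in> sphere 0 1 \<Longrightarrow> 0 < \<rho>2 x"
    and lat: "\<And>c N. 0 < c \<Longrightarrow> N \<in> sphere 0 1 \<Longrightarrow>
       Hs (\<lambda>x. min (\<rho>1 x) (c * \<rho>2 x)) N = min (Hs \<rho>1 N) (c * Hs \<rho>2 N)"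
    and y: "y \<in> sphere 0 1" and z: "z \<in> sphere 0 1"
  shows "Hs \<rho>2 z / Hs \<rho>1 z = Hs \<rho>2 y / Hs \<rho>1 y"
proof (cases "z = - y")
  case False
  then show ?thesis using H_ratio_seg[OF c1 c2 p1 p2 lat y z] by blast
next
  case True
  obtain u :: 'a where u: "norm u = 1" "u \<noteq> y" "u \<noteq> - y"
    using exists_third[OF dim, of y] y by auto
  have us: "u \<in> sphere 0 1" using u by simp
  have "Hs \<rho>2 u / Hs \<rho>1 u = Hs \<rho>2 y / Hs \<rho>1 y"
    using H_ratio_seg[OF c1 c2 p1 p2 lat y us] u by blast
  moreover have "Hs \<rho>2 z / Hs \<rho>1 z = Hs \<rho>2 u / Hs \<rho>1 u"
    using H_ratio_seg[OF c1 c2 p1 p2 lat us z] u True by auto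
  ultimately show ?thesis by simp
qed

lemma radial_props:
  fixes K :: "'a::euclidean_space set"
  assumes K: "compact K" "convex K" "0 \<in> interior K" and x: "x \<in> sphere 0 1"
  shows "0 < radial_fun (frontier K) x \<and> radial_fun (frontier K) x *\<^sub>R x \<in> frontier K"
proof -
  have ne: "interior K \<noteq> {}" using K by auto
  have ri: "rel_interior K = interior K" using rel_interior_nonempty_interior[OF ne] .
  have rf: "rel_frontier K = frontier K" using rel_frontier_nonempty_interior[OF ne] .
  have x0: "x \<noteq> 0" using x by auto
  obtain d where d: "0 < d" "(0 + d *\<^sub>R x) \<in> rel_frontier K"
      "\<And>e. \<lbrakk>0 \<le> e; e < d\<rbrakk> \<Longrightarrow> (0 + e *\<^sub>R x) \<in> rel_interior K"
  proof -
    have b: "bounded K" using compact_imp_bounded[OF K(1)] .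
    have a0: "0 \<in> rel_interior K" using K(3) ri by simp
    have aff: "0 + x \<in> affine hull K" using affine_hull_nonempty_interior[OF ne] by simp
    show ?thesis by (rule ray_to_rel_frontier[OF b a0 aff x0]) (rule that; assumption)+
  qed
  have dF: "d *\<^sub>R x \<in> frontier K" using d(2) rf by simp
  have cl: "closure K = K" using K(1) by (simp add: compact_imp_closed)
  have uniq: "t = d" if t: "0 < t" "t *\<^sub>R x \<in> frontier K" for t
  proof (rule ccontr)
    assume "t \<noteq> d"
    then consider "t < d" | "d < t" by linarith
    then show False
    proof cases
      case 1
      then have "t *\<^sub>R x \<in> interior K" using d(3)[of t] t ri by auto
      then show False using t(2) by (simp add: frontier_def)
    next
      case 2
      have tK: "t *\<^sub>R x \<in> closure K" using t(2) by (simp add: frontier_def)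
      have tp: "0 < t" using 2 d(1) by linarith
      have e1: "0 < 1 - d / t" using 2 tp by (simp add: divide_less_eq_1_pos)
      have e2: "1 - d / t \<le> 1" using d(1) tp by simp
      have "t *\<^sub>R x - (1 - d / t) *\<^sub>R (t *\<^sub>R x - 0) \<in> interior K"
        by (rule mem_interior_closure_convex_shrink[OF K(2) K(3) tK e1 e2])
      moreover have "(1 - d / t) * t = t - d" using tp by (simp add: left_diff_distrib)
      then have "t *\<^sub>R x - (1 - d / t) *\<^sub>R (t *\<^sub>R x - 0) = d *\<^sub>R x"
        by (simp add: scaleR_diff_left)
      ultimately show False using dF by (simp add: frontier_def)
    qed
  qed
  have "radial_fun (frontier K) x = d"
    unfolding radial_fun_def
  proof (rule the_equality)
    show "0 < d \<and> d *\<^sub>R x \<in> frontier K" using d(1) dF by blast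
  next
    fix t assume "0 < t \<and> t *\<^sub>R x \<in> frontier K"
    then show "t = d" using uniq by blast
  qed
  then show ?thesis using d(1) dF by simp
qed

lemma body_facts:
  fixes h \<rho> :: "'a::euclidean_space \<Rightarrow> real"
  assumes bp: "is_body_pair h \<rho>" and rc: "continuous_on (sphere 0 1) \<rho>"
  shows "\<And>N. N \<in> sphere 0 1 \<Longrightarrow> h N = Hs \<rho> N"
    and "\<And>x. x \<in> sphere 0 1 \<Longrightarrow> \<exists>N\<in>sphere 0 1. 0 < inner x N \<and> h N = \<rho> x * inner x N"
proof -
  obtain F where F: "F \<in> hypersurfaces" and eq: "\<And>x. x \<in> sphere 0 1 \<Longrightarrow>
      \<rho> x = radial_fun F x \<and> h x = support_fun F x"
    using bp unfolding is_body_pair_def by blast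
  obtain K where K: "F = frontier K" "compact K" "convex K" "0 \<in> interior K"
    using F unfolding hypersurfaces_def by blast
  have cl: "closure K = K" using K(2) by (simp add: compact_imp_closed)
  have pK: "\<rho> x *\<^sub>R x \<in> K" "0 < \<rho> x" if "x \<in> sphere 0 1" for x
  proof -
    have r: "0 < radial_fun F x \<and> radial_fun F x *\<^sub>R x \<in> frontier K"
      using radial_props[OF K(2-4) that] unfolding K(1) .
    have fs: "frontier K \<subseteq> K" using frontier_subset_closed[OF compact_imp_closed[OF K(2)]] .
    have "\<rho> x = radial_fun F x" using eq[OF that] by blast
    then show "\<rho> x *\<^sub>R x \<in> K" "0 < \<rho> x" using r fs by auto
  qed
  show hH: "h N = Hs \<rho> N" if "N \<in> sphere 0 1" for N
  proof -
    have "h N = support_fun F N" using eq[OF that] by simp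
    also have "\<dots> = (SUP x\<in>sphere 0 1. \<rho> x * inner x N)"
      unfolding support_fun_def using eq by (intro SUP_cong) auto
    finally show ?thesis by (simp add: Hs_def)
  qed
  fix x :: 'a assume x: "x \<in> sphere 0 1"
  define p where "p = \<rho> x *\<^sub>R x"
  have pF: "p \<in> frontier K"
  proof -
    have r: "0 < radial_fun F x \<and> radial_fun F x *\<^sub>R x \<in> frontier K"
      using radial_props[OF K(2-4) x] unfolding K(1) .
    have "\<rho> x = radial_fun F x" using eq[OF x] by blast
    then show ?thesis using r by (simp add: p_def)
  qed
  have pnot: "p \<notin> rel_interior K"
  proof -
    have "interior K \<noteq> {}" using K(4) by blast
    then have "rel_interior K = interior K" by (rule rel_interior_nonempty_interior)
    moreover have "p \<notin> interior K" using pF unfolding frontier_def by blast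
    ultimately show ?thesis by simp
  qed
  have pcl: "p \<in> closure K" using pF unfolding frontier_def by blast
  obtain a where a: "a \<noteq> 0" "\<And>y. y \<in> closure K \<Longrightarrow> inner a p \<le> inner a y"
    and "\<And>y. y \<in> rel_interior K \<Longrightarrow> inner a p < inner a y"
    by (rule supporting_hyperplane_relative_frontier[OF K(3) pcl pnot]) (rule that; assumption)
  define N where "N = - (a /\<^sub>R norm a)"
  have N: "N \<in> sphere 0 1" using a(1) by (simp add: N_def)
  have sup: "inner y N \<le> inner p N" if "y \<in> K" for y
  proof -
    have "inner a p \<le> inner a y" using a(2) that cl by auto
    then have "inner a y / norm a \<ge> inner a p / norm a" by (simp add: divide_right_mono)
    moreover have "inner y N = - (inner a y / norm a)" "inner p N = - (inner a p / norm a)"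
      unfolding N_def by (simp_all add: inner_commute divide_inverse_commute)
    ultimately show ?thesis by linarith
  qed
  have hle: "h N \<le> inner p N"
    unfolding hH[OF N]
  proof (rule Hs_least)
    fix x' :: 'a assume "x' \<in> sphere 0 1"
    then have "inner (\<rho> x' *\<^sub>R x') N \<le> inner p N" using pK sup by blast
    then show "\<rho> x' * inner x' N \<le> inner p N" by simp
  qed
  have hge: "\<rho> x * inner x N \<le> h N"
    unfolding hH[OF N] by (rule Hs_upper[OF rc x])
  obtain e where e: "0 < e" "ball 0 e \<subseteq> K" using K(4) by (meson mem_interior)
  have "(e/2) *\<^sub>R N \<in> ball 0 e" using e(1) N by simp
  then have "inner ((e/2) *\<^sub>R N) N \<le> inner p N" using sup e(2) by blast
  moreover have "inner ((e/2) *\<^sub>R N) N = e/2" using N by (simp add: inner_commute power2_norm_eq_inner[symmetric])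
  ultimately have "0 < inner p N" using e(1) by linarith
  then have ipos: "0 < inner x N" using pK(2)[OF x] by (simp add: p_def zero_less_mult_iff)
  have "h N = \<rho> x * inner x N" using hle hge by (simp add: p_def)
  then show "\<exists>N\<in>sphere 0 1. 0 < inner x N \<and> h N = \<rho> x * inner x N" using N ipos by blast
qed

lemma adm_iff:
  "((h, \<rho>) \<in> admissible) \<longleftrightarrow> continuous_on (sphere 0 1) h \<and> continuous_on (sphere 0 1) \<rho> \<and>
      (\<forall>x\<in>sphere 0 1. h x > 0 \<and> \<rho> x > 0) \<and>
      (\<forall>x\<in>sphere 0 1. \<forall>N\<in>sphere (0::'a::euclidean_space) 1. inner x N > 0 \<longrightarrow> \<rho> x * inner x N \<le> h N)"
proof -
  have "(ln (h N) - ln (\<rho> x) \<ge> ln (inner x N)) \<longleftrightarrow> \<rho> x * inner x N \<le> h N"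
    if "h N > 0" "\<rho> x > 0" "inner x N > 0" for x N :: 'a
  proof -
    have "(ln (h N) - ln (\<rho> x) \<ge> ln (inner x N)) \<longleftrightarrow> ln (\<rho> x * inner x N) \<le> ln (h N)"
      using that by (simp add: ln_mult algebra_simps)
    also have "\<dots> \<longleftrightarrow> \<rho> x * inner x N \<le> h N" using that by simp
    finally show ?thesis .
  qed
  then show ?thesis unfolding admissible_def by auto
qed

lemma int_cont:
  fixes M :: "'a::euclidean_space measure" and f :: "'a \<Rightarrow> real"
  assumes sM: "sets M = SA" and fin: "emeasure M (sphere 0 1) < \<infinity>"
    and f: "continuous_on (sphere 0 1) f"
  shows "integrable M f"
proof -
  have sp: "space M = sphere 0 1"
    using sets_eq_imp_space_eq[OF sM] by (simp add: space_restrict_space)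
  interpret finite_measure M
    by (rule finite_measureI) (use fin sp in auto)
  obtain B where B: "\<And>x. x \<in> sphere (0::'a) 1 \<Longrightarrow> norm (f x) \<le> B"
  proof -
    have "bounded (f ` sphere 0 1)"
      by (intro compact_imp_bounded compact_continuous_image f) simp
    then obtain B where "\<forall>y\<in>f ` sphere 0 1. norm y \<le> B" unfolding bounded_iff by blast
    then show ?thesis using that[of B] by blast
  qed
  have meas: "f \<in> borel_measurable M"
    unfolding measurable_cong_sets[OF sM refl] by (rule borel_measurable_continuous_on_restrict[OF f])
  show ?thesis
    by (rule integrable_const_bound[where B=B]) (use B sp meas in auto)
qed

lemma int_sm:
  fixes f :: "'a::euclidean_space \<Rightarrow> real"
  assumes "continuous_on (sphere 0 1) f"
  shows "integrable (sphere_measure :: 'a measure) f"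
  by (rule int_cont[OF sm_sets sm_finite assms])

lemma integral_sum_eq:
  fixes f g f' g' :: "'a \<Rightarrow> real"
  assumes "integrable M f" "integrable M g" "integrable M f'" "integrable M g'"
    and "\<And>x. x \<in> space M \<Longrightarrow> f x + g x = f' x + g' x"
  shows "integral\<^sup>L M f + integral\<^sup>L M g = integral\<^sup>L M f' + integral\<^sup>L M g'"
proof -
  have "integral\<^sup>L M f + integral\<^sup>L M g = integral\<^sup>L M (\<lambda>x. f x + g x)"
    using assms by (simp add: Bochner_Integration.integral_add)
  also have "\<dots> = integral\<^sup>L M (\<lambda>x. f' x + g' x)"
    using assms(5) by (intro Bochner_Integration.integral_cong) auto
  also have "\<dots> = integral\<^sup>L M f' + integral\<^sup>L M g'"
    using assms by (simp add: Bochner_Integration.integral_add)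
  finally show ?thesis .
qed

lemma ln_cont:
  fixes h :: "'a::euclidean_space \<Rightarrow> real"
  assumes "continuous_on (sphere 0 1) h" "\<And>x. x \<in> sphere (0::'a::euclidean_space) 1 \<Longrightarrow> h x > 0"
  shows "continuous_on (sphere 0 1) (\<lambda>x. ln (h x))"
  by (rule continuous_on_ln) (use assms in force)+

lemma space_mu: "sets \<mu> = SA \<Longrightarrow> space \<mu> = sphere (0::'a::euclidean_space) 1"
  using sets_eq_imp_space_eq[of \<mu> "restrict_space borel (sphere (0::'a) 1)"] by (simp add: space_restrict_space)

lemma ln_min_max: "0 < a \<Longrightarrow> 0 < b \<Longrightarrow> ln (min a b) + ln (max a b) = ln a + ln (b::real)"
  by (cases "a \<le> b") (auto simp: min_def max_def)

lemma adm_facts: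
  assumes "(h, \<rho>) \<in> admissible"
  shows "continuous_on (sphere 0 1) h" "continuous_on (sphere 0 1) \<rho>"
    "\<And>x. x \<in> sphere 0 1 \<Longrightarrow> h x > 0" "\<And>x. x \<in> sphere 0 1 \<Longrightarrow> \<rho> x > 0"
    "\<And>x N. x \<in> sphere 0 1 \<Longrightarrow> N \<in> sphere (0::'a::euclidean_space) 1 \<Longrightarrow> inner x N > 0 \<Longrightarrow> \<rho> x * inner x N \<le> h N"
  using assms unfolding adm_iff by auto

lemma Q_int:
  fixes \<mu> :: "'a::euclidean_space measure"
  assumes sM: "sets \<mu> = SA" and fin: "emeasure \<mu> (sphere 0 1) < \<infinity>" and adm: "(h, \<rho>) \<in> admissible"
  shows "integrable sphere_measure (\<lambda>x. ln (h x))" "integrable \<mu> (\<lambda>x. ln (\<rho> x))"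
  using adm_facts[OF adm]
  by (auto intro!: int_sm int_cont[OF sM fin] ln_cont)

lemma lattice_min:
  fixes \<mu> :: "'a::euclidean_space measure"
  assumes sM: "sets \<mu> = SA" and fin: "emeasure \<mu> (sphere 0 1) < \<infinity>"
    and m1: "is_Q_minimizer \<mu> h1 \<rho>1" and m2: "is_Q_minimizer \<mu> h2 \<rho>2"
  shows "is_Q_minimizer \<mu> (\<lambda>x. min (h1 x) (h2 x)) (\<lambda>x. min (\<rho>1 x) (\<rho>2 x))"
proof -
  have a1: "(h1, \<rho>1) \<in> admissible" and a2: "(h2, \<rho>2) \<in> admissible"
    using m1 m2 unfolding is_Q_minimizer_def by auto
  note f1 = adm_facts[OF a1] and f2 = adm_facts[OF a2]
  have amin: "((\<lambda>x. min (h1 x) (h2 x)), (\<lambda>x. min (\<rho>1 x) (\<rho>2 x))) \<in> admissible"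
    unfolding adm_iff
  proof (intro conjI ballI impI)
    show "continuous_on (sphere 0 1) (\<lambda>x. min (h1 x) (h2 x))"
      by (intro continuous_on_min f1 f2)
    show "continuous_on (sphere 0 1) (\<lambda>x. min (\<rho>1 x) (\<rho>2 x))"
      by (intro continuous_on_min f1 f2)
  next
    fix x :: 'a assume "x \<in> sphere 0 1"
    then show "0 < min (h1 x) (h2 x)" "0 < min (\<rho>1 x) (\<rho>2 x)" using f1 f2 by auto
  next
    fix x N :: 'a assume x: "x \<in> sphere 0 1" and N: "N \<in> sphere 0 1" and t: "0 < inner x N"
    have i1: "\<rho>1 x * inner x N \<le> h1 N" and i2: "\<rho>2 x * inner x N \<le> h2 N"
      using f1(5)[OF x N t] f2(5)[OF x N t] .
    have "min (\<rho>1 x) (\<rho>2 x) * inner x N \<le> \<rho>1 x * inner x N"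
      "min (\<rho>1 x) (\<rho>2 x) * inner x N \<le> \<rho>2 x * inner x N"
      using t by (auto intro: mult_right_mono)
    then show "min (\<rho>1 x) (\<rho>2 x) * inner x N \<le> min (h1 N) (h2 N)" using i1 i2 by linarith
  qed
  have amax: "((\<lambda>x. max (h1 x) (h2 x)), (\<lambda>x. max (\<rho>1 x) (\<rho>2 x))) \<in> admissible"
    unfolding adm_iff
  proof (intro conjI ballI impI)
    show "continuous_on (sphere 0 1) (\<lambda>x. max (h1 x) (h2 x))"
      by (intro continuous_on_max f1 f2)
    show "continuous_on (sphere 0 1) (\<lambda>x. max (\<rho>1 x) (\<rho>2 x))"
      by (intro continuous_on_max f1 f2)
  next
    fix x :: 'a assume "x \<in> sphere 0 1"
    then show "0 < max (h1 x) (h2 x)" "0 < max (\<rho>1 x) (\<rho>2 x)" using f1 f2 by (auto simp: less_max_iff_disj)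
  next
    fix x N :: 'a assume x: "x \<in> sphere 0 1" and N: "N \<in> sphere 0 1" and t: "0 < inner x N"
    have i1: "\<rho>1 x * inner x N \<le> h1 N" and i2: "\<rho>2 x * inner x N \<le> h2 N"
      using f1(5)[OF x N t] f2(5)[OF x N t] .
    have "max (\<rho>1 x) (\<rho>2 x) * inner x N = \<rho>1 x * inner x N \<or>
          max (\<rho>1 x) (\<rho>2 x) * inner x N = \<rho>2 x * inner x N"
      by (simp add: max_def)
    then show "max (\<rho>1 x) (\<rho>2 x) * inner x N \<le> max (h1 N) (h2 N)" using i1 i2 by auto
  qed
  have sp: "space \<mu> = sphere 0 1" by (rule space_mu[OF sM])
  note I1 = Q_int[OF sM fin a1] and I2 = Q_int[OF sM fin a2]
    and Im = Q_int[OF sM fin amin] and IM = Q_int[OF sM fin amax]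
  have eqS: "(\<integral>x. ln (min (h1 x) (h2 x)) \<partial>sphere_measure) + (\<integral>x. ln (max (h1 x) (h2 x)) \<partial>sphere_measure)
      = (\<integral>x. ln (h1 x) \<partial>sphere_measure) + (\<integral>x. ln (h2 x) \<partial>sphere_measure)"
    by (rule integral_sum_eq[OF Im(1) IM(1) I1(1) I2(1)]) (use f1 f2 in \<open>auto simp: sm_space ln_min_max\<close>)
  have eqM: "(\<integral>x. ln (min (\<rho>1 x) (\<rho>2 x)) \<partial>\<mu>) + (\<integral>x. ln (max (\<rho>1 x) (\<rho>2 x)) \<partial>\<mu>)
      = (\<integral>x. ln (\<rho>1 x) \<partial>\<mu>) + (\<integral>x. ln (\<rho>2 x) \<partial>\<mu>)"
    by (rule integral_sum_eq[OF Im(2) IM(2) I1(2) I2(2)]) (use f1 f2 in \<open>auto simp: sp ln_min_max\<close>)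
  have Qeq: "Qfun \<mu> (\<lambda>x. min (h1 x) (h2 x)) (\<lambda>x. min (\<rho>1 x) (\<rho>2 x))
     + Qfun \<mu> (\<lambda>x. max (h1 x) (h2 x)) (\<lambda>x. max (\<rho>1 x) (\<rho>2 x))
     = Qfun \<mu> h1 \<rho>1 + Qfun \<mu> h2 \<rho>2"
    unfolding Qfun_def using eqS eqM by linarith
  have "Qfun \<mu> h2 \<rho>2 \<le> Qfun \<mu> (\<lambda>x. max (h1 x) (h2 x)) (\<lambda>x. max (\<rho>1 x) (\<rho>2 x))"
    using m2 amax unfolding is_Q_minimizer_def by fast
  then have le1: "Qfun \<mu> (\<lambda>x. min (h1 x) (h2 x)) (\<lambda>x. min (\<rho>1 x) (\<rho>2 x)) \<le> Qfun \<mu> h1 \<rho>1"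
    using Qeq by linarith
  show ?thesis unfolding is_Q_minimizer_def
  proof (intro conjI amin ballI)
    fix p :: "('a \<Rightarrow> real) \<times> ('a \<Rightarrow> real)" assume p: "p \<in> admissible"
    obtain h' \<rho>' where pe: "p = (h', \<rho>')" by (cases p)
    have "Qfun \<mu> h1 \<rho>1 \<le> Qfun \<mu> h' \<rho>'" using m1 p pe unfolding is_Q_minimizer_def by fast
    then show "case p of (h', \<rho>') \<Rightarrow> Qfun \<mu> (\<lambda>x. min (h1 x) (h2 x)) (\<lambda>x. min (\<rho>1 x) (\<rho>2 x)) \<le> Qfun \<mu> h' \<rho>'"
      using le1 pe by simp
  qed
qed

lemma integral_ln_scale:
  fixes M :: "'a measure" and f :: "'a \<Rightarrow> real"
  assumes "integrable M (\<lambda>x. ln (f x))" "\<And>x. x \<in> space M \<Longrightarrow> 0 < f x" "0 < c"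
    and "finite_measure M"
  shows "(\<integral>x. ln (c * f x) \<partial>M) = measure M (space M) * ln c + (\<integral>x. ln (f x) \<partial>M)"
proof -
  interpret finite_measure M by fact
  have "(\<integral>x. ln (c * f x) \<partial>M) = (\<integral>x. ln c + ln (f x) \<partial>M)"
  proof (intro Bochner_Integration.integral_cong refl)
    fix x assume "x \<in> space M"
    show "ln (c * f x) = ln c + ln (f x)" using assms(3) assms(2)[OF \<open>x \<in> space M\<close>] by (simp add: ln_mult)
  qed
  also have "\<dots> = (\<integral>x. ln c \<partial>M) + (\<integral>x. ln (f x) \<partial>M)"
    using assms(1) by (intro Bochner_Integration.integral_add) auto
  finally show ?thesis by simp
qed

lemma scale_min:
  fixes \<mu> :: "'a::euclidean_space measure"
  assumes sM: "sets \<mu> = SA" and fin: "emeasure \<mu> (sphere 0 1) < \<infinity>"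
    and tot: "measure \<mu> (sphere 0 1) = measure sphere_measure (sphere (0::'a) 1)"
    and c: "0 < c"
  shows "(h, \<rho>) \<in> admissible \<Longrightarrow> (\<lambda>x. c * h x, \<lambda>x. c * \<rho> x) \<in> admissible"
    and "(h, \<rho>) \<in> admissible \<Longrightarrow> Qfun \<mu> (\<lambda>x. c * h x) (\<lambda>x. c * \<rho> x) = Qfun \<mu> h \<rho>"
proof -
  assume a: "(h, \<rho>) \<in> admissible"
  note f = adm_facts[OF a]
  show "(\<lambda>x. c * h x, \<lambda>x. c * \<rho> x) \<in> admissible"
    unfolding adm_iff
  proof (intro conjI ballI impI)
    show "continuous_on (sphere 0 1) (\<lambda>x. c * h x)" "continuous_on (sphere 0 1) (\<lambda>x. c * \<rho> x)"
      by (intro continuous_intros f)+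
  next
    fix x :: 'a assume "x \<in> sphere 0 1"
    then show "0 < c * h x" "0 < c * \<rho> x" using f c by auto
  next
    fix x N :: 'a assume x: "x \<in> sphere 0 1" and N: "N \<in> sphere 0 1" and t: "0 < inner x N"
    show "c * \<rho> x * inner x N \<le> c * h N" using f(5)[OF x N t] c by (simp add: mult.assoc)
  qed
next
  assume a: "(h, \<rho>) \<in> admissible"
  note f = adm_facts[OF a]
  note I = Q_int[OF sM fin a]
  have sp: "space \<mu> = sphere 0 1" by (rule space_mu[OF sM])
  have fm: "finite_measure \<mu>" by (rule finite_measureI) (use fin sp in auto)
  have fs: "finite_measure (sphere_measure :: 'a measure)"
  proof (rule finite_measureI)
    have "emeasure (sphere_measure :: 'a measure) (space sphere_measure) < \<infinity>" by (rule sm_finite)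
    then show "emeasure (sphere_measure :: 'a measure) (space sphere_measure) \<noteq> \<infinity>" by simp
  qed
  show "Qfun \<mu> (\<lambda>x. c * h x) (\<lambda>x. c * \<rho> x) = Qfun \<mu> h \<rho>"
  proof -
    have hp: "\<And>x. x \<in> space sphere_measure \<Longrightarrow> 0 < h x" using f(3) by (simp add: sm_space)
    have rp: "\<And>x. x \<in> space \<mu> \<Longrightarrow> 0 < \<rho> x" using f(4) sp by auto
    have e1: "(\<integral>x. ln (c * h x) \<partial>sphere_measure) = measure (sphere_measure :: 'a measure) (sphere 0 1) * ln c + (\<integral>x. ln (h x) \<partial>sphere_measure)"
      using integral_ln_scale[OF I(1) hp c fs] by (simp add: sm_space)
    have e2: "(\<integral>x. ln (c * \<rho> x) \<partial>\<mu>) = measure \<mu> (sphere 0 1) * ln c + (\<integral>x. ln (\<rho> x) \<partial>\<mu>)"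
      using integral_ln_scale[OF I(2) rp c fm] by (simp add: sp)
    show ?thesis unfolding Qfun_def e1 e2 tot by simp
  qed
qed

lemma scale_minimizer:
  fixes \<mu> :: "'a::euclidean_space measure"
  assumes sM: "sets \<mu> = SA" and fin: "emeasure \<mu> (sphere 0 1) < \<infinity>"
    and tot: "measure \<mu> (sphere 0 1) = measure sphere_measure (sphere (0::'a) 1)"
    and c: "0 < c" and m: "is_Q_minimizer \<mu> h \<rho>"
  shows "is_Q_minimizer \<mu> (\<lambda>x. c * h x) (\<lambda>x. c * \<rho> x)"
proof -
  have a: "(h, \<rho>) \<in> admissible" using m unfolding is_Q_minimizer_def by auto
  show ?thesis unfolding is_Q_minimizer_def
  proof (intro conjI ballI)
    show "(\<lambda>x. c * h x, \<lambda>x. c * \<rho> x) \<in> admissible" by (rule scale_min(1)[OF sM fin tot c a])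
  next
    fix p :: "('a \<Rightarrow> real) \<times> ('a \<Rightarrow> real)" assume p: "p \<in> admissible"
    obtain h' \<rho>' where pe: "p = (h', \<rho>')" by (cases p)
    have "Qfun \<mu> h \<rho> \<le> Qfun \<mu> h' \<rho>'" using m p pe unfolding is_Q_minimizer_def by fast
    then show "case p of (h', \<rho>') \<Rightarrow> Qfun \<mu> (\<lambda>x. c * h x) (\<lambda>x. c * \<rho> x) \<le> Qfun \<mu> h' \<rho>'"
      using scale_min(2)[OF sM fin tot c a] pe by simp
  qed
qed

lemma cont_zero_AE:
  fixes g :: "'a::euclidean_space \<Rightarrow> real"
  assumes ms: "measure_space (sphere 0 1) SA (sm_fun :: 'a set \<Rightarrow> ennreal)"
    and g: "continuous_on (sphere 0 1) g" and ae: "AE x in sphere_measure. g x = 0"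
    and N0: "N0 \<in> sphere 0 1"
  shows "g N0 = 0"
proof (rule ccontr)
  assume ne: "g N0 \<noteq> 0"
  then have gp: "0 < \<bar>g N0\<bar>" by simp
  obtain e where e: "0 < e" "\<And>x. x \<in> sphere 0 1 \<Longrightarrow> dist x N0 < e \<Longrightarrow> dist (g x) (g N0) < \<bar>g N0\<bar>"
    using g N0 gp unfolding continuous_on_iff by blast
  obtain Z where Z: "{x \<in> space sphere_measure. \<not> g x = 0} \<subseteq> Z" "emeasure sphere_measure Z = 0"
    "Z \<in> sets sphere_measure"
    using ae by (rule AE_E)
  have sub: "sphere 0 1 \<inter> ball N0 e \<subseteq> Z"
  proof
    fix x assume x: "x \<in> sphere 0 1 \<inter> ball N0 e"
    then have "dist (g x) (g N0) < \<bar>g N0\<bar>" using e(2)[of x] by (simp add: dist_commute)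
    then have "g x \<noteq> 0" by (auto simp: dist_real_def)
    then show "x \<in> Z" using Z(1) x sm_space by auto
  qed
  have "emeasure (sphere_measure :: 'a measure) (sphere 0 1 \<inter> ball N0 e) \<le> emeasure sphere_measure Z"
    using sub Z(3) by (rule emeasure_mono)
  then have "emeasure (sphere_measure :: 'a measure) (sphere 0 1 \<inter> ball N0 e) = 0" using Z(2) by simp
  then show False using sm_pos[OF ms N0 e(1)] by simp
qed

lemma tight:
  fixes \<mu> :: "'a::euclidean_space measure"
  assumes sM: "sets \<mu> = SA" and fin: "emeasure \<mu> (sphere 0 1) < \<infinity>"
    and ms: "measure_space (sphere 0 1) SA (sm_fun :: 'a set \<Rightarrow> ennreal)"
    and m: "is_Q_minimizer \<mu> h \<rho>" and N: "N \<in> sphere 0 1"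
  shows "h N = Hs \<rho> N"
proof -
  have a: "(h, \<rho>) \<in> admissible" using m unfolding is_Q_minimizer_def by auto
  note f = adm_facts[OF a]
  obtain M where M: "\<And>x. x \<in> sphere (0::'a) 1 \<Longrightarrow> \<rho> x \<le> M"
  proof -
    obtain x0 where "x0 \<in> sphere (0::'a) 1" "\<And>y. y \<in> sphere 0 1 \<Longrightarrow> \<rho> y \<le> \<rho> x0"
      using continuous_attains_sup[OF compact_sphere sphere_ne f(2)] by blast
    then show ?thesis using that by blast
  qed
  have rb: "\<And>x. x \<in> sphere 0 1 \<Longrightarrow> 0 \<le> \<rho> x \<and> \<rho> x \<le> M" using M f(4) less_imp_le by blast
  have hc: "continuous_on (sphere 0 1) (Hs \<rho>)" by (rule Hs_continuous[OF f(2) rb])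
  have Hpos: "0 < Hs \<rho> x" if "x \<in> sphere 0 1" for x
  proof -
    have "\<rho> x * inner x x \<le> Hs \<rho> x" by (rule Hs_upper[OF f(2) that])
    moreover have "inner x x = 1" using that by (simp add: power2_norm_eq_inner[symmetric])
    ultimately show ?thesis using f(4)[OF that] by simp
  qed
  have a': "(Hs \<rho>, \<rho>) \<in> admissible"
    unfolding adm_iff using hc f(2) Hpos f(4) Hs_upper[OF f(2)] by auto
  have le: "Hs \<rho> x \<le> h x" if "x \<in> sphere 0 1" for x
  proof (rule Hs_least)
    fix y :: 'a assume y: "y \<in> sphere 0 1"
    show "\<rho> y * inner y x \<le> h x"
    proof (cases "0 < inner y x")
      case True
      then show ?thesis using f(5)[OF y that] by simp
    next
      case False
      then have "\<rho> y * inner y x \<le> 0" using f(4)[OF y] by (simp add: mult_nonneg_nonpos)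
      then show ?thesis using f(3)[OF that] by linarith
    qed
  qed
  have "Qfun \<mu> h \<rho> \<le> Qfun \<mu> (Hs \<rho>) \<rho>" using m a' unfolding is_Q_minimizer_def by fast
  then have i1: "(\<integral>x. ln (h x) \<partial>sphere_measure) \<le> (\<integral>x. ln (Hs \<rho> x) \<partial>sphere_measure)"
    unfolding Qfun_def by simp
  define g where "g x = ln (h x) - ln (Hs \<rho> x)" for x
  have gc: "continuous_on (sphere 0 1) g" unfolding g_def
    by (intro continuous_on_diff ln_cont f hc Hpos) auto
  have gi: "integrable sphere_measure g" by (rule int_sm[OF gc])
  have gnn: "0 \<le> g x" if "x \<in> sphere 0 1" for x
    using le[OF that] Hpos[OF that] by (simp add: g_def)
  have "(\<integral>x. g x \<partial>sphere_measure) = (\<integral>x. ln (h x) \<partial>sphere_measure) - (\<integral>x. ln (Hs \<rho> x) \<partial>sphere_measure)"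
    unfolding g_def using Q_int(1)[OF sM fin a] Q_int(1)[OF sM fin a'] by simp
  moreover have "0 \<le> (\<integral>x. g x \<partial>sphere_measure)"
    using gnn by (intro integral_nonneg_AE AE_I2) (auto simp: sm_space)
  ultimately have "(\<integral>x. g x \<partial>sphere_measure) = 0" using i1 by linarith
  moreover have ae0: "AE x in sphere_measure. 0 \<le> g x"
    by (rule AE_I2) (simp add: gnn sm_space)
  ultimately have "AE x in sphere_measure. g x = 0"
    using integral_nonneg_eq_0_iff_AE[OF gi ae0] by simp
  then have "g N = 0" by (rule cont_zero_AE[OF ms gc _ N])
  then have "ln (h N) = ln (Hs \<rho> N)" by (simp add: g_def)
  then show ?thesis using f(3)[OF N] Hpos[OF N] by simp
qed

lemma singleton_sph_convex:
  fixes b :: "'a::euclidean_space"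
  assumes "norm b = 1"
  shows "sph_convex {b}"
  unfolding sph_convex_def
proof (intro conjI)
  show "{b} \<subseteq> sphere 0 1" using assms by simp
  have eq: "{t *\<^sub>R x | t x. 0 \<le> t \<and> x \<in> {b}} = (\<lambda>t. t *\<^sub>R b) ` {0..}" by auto
  show "convex {t *\<^sub>R x | t x. 0 \<le> t \<and> x \<in> {b}}"
    unfolding eq by (intro convex_linear_image convex_real_interval) (simp add: linear_scaleR_left)
qed

theorem theorem7:
  fixes \<mu> :: "'a::euclidean_space measure"
    and h1 \<rho>1 h2 \<rho>2 :: "'a \<Rightarrow> real"
  assumes dim: "DIM('a) \<ge> 2"
    and borel: "sets \<mu> = sets (restrict_space borel (sphere (0::'a) 1))"
    and total: "emeasure \<mu> (sphere 0 1) = emeasure sphere_measure (sphere (0::'a) 1)"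
    and cond: "\<And>\<omega>. sph_convex \<omega> \<Longrightarrow> \<omega> \<noteq> {} \<Longrightarrow> \<omega> \<noteq> sphere 0 1 \<Longrightarrow> \<omega> \<in> sets \<mu> \<Longrightarrow>
                 emeasure \<mu> (sphere 0 1 - \<omega>) > emeasure sphere_measure (polar_sph \<omega>)"
    and min1: "is_Q_minimizer \<mu> h1 \<rho>1" and body1: "is_body_pair h1 \<rho>1"
    and min2: "is_Q_minimizer \<mu> h2 \<rho>2" and body2: "is_body_pair h2 \<rho>2"
  shows "\<exists>c>0. \<forall>x\<in>sphere 0 1. h2 x = c * h1 x \<and> \<rho>2 x = c * \<rho>1 x"
proof -
  have sp: "space \<mu> = sphere 0 1" by (rule space_mu[OF borel])
  have fin: "emeasure \<mu> (sphere 0 1) < \<infinity>" using total sm_finite by metis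
  have tot: "measure \<mu> (sphere 0 1) = measure sphere_measure (sphere (0::'a) 1)"
    using total by (simp add: measure_def)
  obtain b :: 'a where b: "b \<in> Basis" using nonempty_Basis by blast
  have bn: "norm b = 1" using b by simp
  have ms: "measure_space (sphere 0 1) SA (sm_fun :: 'a set \<Rightarrow> ennreal)"
  proof (rule ccontr)
    assume nms: "\<not> measure_space (sphere 0 1) SA (sm_fun :: 'a set \<Rightarrow> ennreal)"
    have z: "emeasure (sphere_measure :: 'a measure) B = 0" for B using sm_zero_if_not_ms[OF nms] .
    have bS: "{b} \<in> sets \<mu>" unfolding borel sets_restrict_space using bn
      by (intro image_eqI[of _ _ "{b}"]) auto
    have "{b} \<noteq> sphere 0 1"
    proof
      assume "{b} = sphere 0 1"
      moreover have "- b \<in> sphere 0 1" using bn by simp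
      ultimately have "- b = b" by blast
      then have "inner b (- b) = inner b b" by simp
      moreover have "inner b b = 1" using bn by (simp add: power2_norm_eq_inner[symmetric])
      ultimately show False by simp
    qed
    then have gt: "emeasure \<mu> (sphere 0 1 - {b}) > 0"
      using cond[OF singleton_sph_convex[OF bn] _ _ bS] z by simp
    have "emeasure \<mu> (sphere 0 1 - {b}) \<le> emeasure \<mu> (sphere 0 1)"
      by (rule emeasure_mono) (use sp sets.top[of \<mu>] in auto)
    also have "\<dots> = 0" using total z by simp
    finally show False using gt by simp
  qed
  have a1: "(h1, \<rho>1) \<in> admissible" and a2: "(h2, \<rho>2) \<in> admissible"
    using min1 min2 unfolding is_Q_minimizer_def by auto
  note f1 = adm_facts[OF a1] and f2 = adm_facts[OF a2]
  have t1: "h1 N = Hs \<rho>1 N" if "N \<in> sphere 0 1" for N by (rule tight[OF borel fin ms min1 that])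
  have t2: "h2 N = Hs \<rho>2 N" if "N \<in> sphere 0 1" for N by (rule tight[OF borel fin ms min2 that])
  have lat: "Hs (\<lambda>x. min (\<rho>1 x) (c * \<rho>2 x)) N = min (Hs \<rho>1 N) (c * Hs \<rho>2 N)"
    if c: "0 < c" and N: "N \<in> sphere 0 1" for c N
  proof -
    have m2c: "is_Q_minimizer \<mu> (\<lambda>x. c * h2 x) (\<lambda>x. c * \<rho>2 x)"
      by (rule scale_minimizer[OF borel fin tot c min2])
    have mm: "is_Q_minimizer \<mu> (\<lambda>x. min (h1 x) (c * h2 x)) (\<lambda>x. min (\<rho>1 x) (c * \<rho>2 x))"
      using lattice_min[OF borel fin min1 m2c] by simp
    have "min (h1 N) (c * h2 N) = Hs (\<lambda>x. min (\<rho>1 x) (c * \<rho>2 x)) N"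
      using tight[OF borel fin ms mm N] by simp
    then show ?thesis using t1[OF N] t2[OF N] by simp
  qed
  have bS': "b \<in> sphere 0 1" using bn by simp
  define k where "k = Hs \<rho>2 b / Hs \<rho>1 b"
  have kp: "0 < k" unfolding k_def using t1[OF bS'] t2[OF bS'] f1(3)[OF bS'] f2(3)[OF bS'] by simp
  have hk: "h2 z = k * h1 z" if z: "z \<in> sphere 0 1" for z
  proof -
    have "Hs \<rho>2 z / Hs \<rho>1 z = k"
      unfolding k_def by (rule H_ratio[OF dim f1(2) f2(2) f1(4) f2(4) lat bS' z]) auto
    then show ?thesis using t1[OF z] t2[OF z] f1(3)[OF z] by (simp add: field_simps)
  qed
  have rk: "\<rho>2 x = k * \<rho>1 x" if x: "x \<in> sphere 0 1" for x
  proof (rule antisym)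
    obtain N1 where N1: "N1 \<in> sphere 0 1" "0 < inner x N1" "h1 N1 = \<rho>1 x * inner x N1"
      using body_facts(2)[OF body1 f1(2) x] by blast
    have "\<rho>2 x * inner x N1 \<le> h2 N1" using f2(5)[OF x N1(1,2)] .
    also have "\<dots> = k * (\<rho>1 x * inner x N1)" using hk[OF N1(1)] N1(3) by simp
    finally show "\<rho>2 x \<le> k * \<rho>1 x" using N1(2) by (simp add: mult.assoc[symmetric] mult_le_cancel_right)
  next
    obtain N2 where N2: "N2 \<in> sphere 0 1" "0 < inner x N2" "h2 N2 = \<rho>2 x * inner x N2"
      using body_facts(2)[OF body2 f2(2) x] by blast
    have "k * (\<rho>1 x * inner x N2) \<le> k * h1 N2" using f1(5)[OF x N2(1,2)] kp by simp
    also have "\<dots> = \<rho>2 x * inner x N2" using hk[OF N2(1)] N2(3) by simp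
    finally show "k * \<rho>1 x \<le> \<rho>2 x" using N2(2) by (simp add: mult.assoc[symmetric] mult_le_cancel_right)
  qed
  show ?thesis using kp hk rk by blast
qed

end
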